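(* Let $G=(V_L,V_R,E)$ be a bipartite graph in which every vertex of $V_L$ has degree at most $\Delta_L$ and every vertex of $V_R$ has degree at least $2$. Let $M\subseteq V_R$ be such that every $v\in V_L$ has exactly one neighbour in $M$. Then for every $u\in V_L$ and $k\ge1$, the number of connected induced subgraphs $G'$ of $G$ such that (1) $u\in V(G')$, (2) $|V(G')\cap V_R|=k$, (3) $\Gamma_G(v)\subseteq V(G')$ for every $v\in V(G')\cap V_R$, and (4) every $v\in V(G')\cap V_L$ has exactly one neighbour in $V(G')\cap M$ and exactly one neighbour in $V(G')\cap(V_R\setminus M)$, is at most $(\Delta_L-1)^{k-1}$.
   Context: $\Gamma_G(v)$ denotes the set of neighbours of $v$ in $G$. *)

theory Defs
  imports Main
begin

definition bipartite_graph :: "'a set \<Rightarrow> 'a set \<Rightarrow> ('a \<Rightarrow> 'a \<Rightarrow> bool) \<Rightarrow> bool" where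
  "bipartite_graph VL VR adj \<longleftrightarrow>
     finite VL \<and> finite VR \<and> VL \<inter> VR = {} \<and>
     (\<forall>x y. adj x y \<longrightarrow> adj y x) \<and>
     (\<forall>x y. adj x y \<longrightarrow> (x \<in> VL \<and> y \<in> VR) \<or> (x \<in> VR \<and> y \<in> VL))"

definition nbrs :: "('a \<Rightarrow> 'a \<Rightarrow> bool) \<Rightarrow> 'a \<Rightarrow> 'a set" where
  "nbrs adj v = {w. adj v w}"

definition degree :: "('a \<Rightarrow> 'a \<Rightarrow> bool) \<Rightarrow> 'a \<Rightarrow> nat" where
  "degree adj v = card (nbrs adj v)"

definition connected_induced :: "('a \<Rightarrow> 'a \<Rightarrow> bool) \<Rightarrow> 'a set \<Rightarrow> bool" where
  "connected_induced adj S \<longleftrightarrow> S \<noteq> {} \<and>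
     (\<forall>x\<in>S. \<forall>y\<in>S. (\<lambda>a b. a \<in> S \<and> b \<in> S \<and> adj a b)\<^sup>*\<^sup>* x y)"

end

theory Submission
  imports Defs
begin

definition mv :: "('a \<Rightarrow> 'a \<Rightarrow> bool) \<Rightarrow> 'a set \<Rightarrow> 'a \<Rightarrow> 'a" where
  "mv adj M v = (THE x. x \<in> nbrs adj v \<inter> M)"

definition fam where
  "fam VL VR M adj k u = {S. S \<subseteq> VL \<union> VR \<and> connected_induced adj S \<and>
                 u \<in> S \<and>
                 card (S \<inter> VR) = k \<and>
                 (\<forall>v\<in>S \<inter> VR. nbrs adj v \<subseteq> S) \<and>
                 (\<forall>v\<in>S \<inter> VL. card (nbrs adj v \<inter> (S \<inter> M)) = 1 \<and>
                               card (nbrs adj v \<inter> (S \<inter> (VR - M))) = 1)}"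

definition AA where
  "AA adj M u C = insert (mv adj M u) (mv adj M ` (\<Union>c\<in>C. nbrs adj c))"

definition DD where
  "DD adj M u C = (\<Union>x\<in>AA adj M u C. nbrs adj x)"

context
  fixes VL VR M :: "'a set" and adj :: "'a \<Rightarrow> 'a \<Rightarrow> bool" and \<Delta>L k :: nat and u :: 'a
  assumes bg: "bipartite_graph VL VR adj"
    and degL: "\<forall>v\<in>VL. degree adj v \<le> \<Delta>L"
    and MR: "M \<subseteq> VR"
    and Mone: "\<forall>v\<in>VL. card (nbrs adj v \<inter> M) = 1"
    and uL: "u \<in> VL"
begin

lemma sym: "adj x y \<Longrightarrow> adj y x"
  using bg unfolding bipartite_graph_def by blast

lemma bip: "adj x y \<Longrightarrow> (x \<in> VL \<and> y \<in> VR) \<or> (x \<in> VR \<and> y \<in> VL)"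
  using bg unfolding bipartite_graph_def by blast

lemma disj: "VL \<inter> VR = {}" and finL: "finite VL" and finR: "finite VR"
  using bg unfolding bipartite_graph_def by auto

lemma mv_in: assumes "v \<in> VL" shows "mv adj M v \<in> nbrs adj v \<inter> M"
    and "\<And>x. x \<in> nbrs adj v \<inter> M \<Longrightarrow> x = mv adj M v"
proof -
  from Mone assms obtain z where z: "nbrs adj v \<inter> M = {z}"
    using card_1_singletonE by blast
  then show "mv adj M v \<in> nbrs adj v \<inter> M" "\<And>x. x \<in> nbrs adj v \<inter> M \<Longrightarrow> x = mv adj M v"
    unfolding mv_def by auto
qed

lemma nbrs_fin: "finite (nbrs adj v)"
proof -
  have "nbrs adj v \<subseteq> VL \<union> VR" using bip unfolding nbrs_def by blast
  then show ?thesis using finL finR finite_subset by blast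
qed

lemma adjL: "c \<in> VR \<Longrightarrow> adj c w \<Longrightarrow> w \<in> VL"
  using bip disj by blast

lemma AA_M: assumes "C \<subseteq> VR" shows "AA adj M u C \<subseteq> M"
proof
  fix x assume "x \<in> AA adj M u C"
  then consider "x = mv adj M u" | c w where "c \<in> C" "w \<in> nbrs adj c" "x = mv adj M w"
    unfolding AA_def by blast
  then show "x \<in> M"
  proof cases
    case 1 then show ?thesis using mv_in(1)[OF uL] by blast
  next
    case 2
    then have "w \<in> VL" using adjL assms unfolding nbrs_def by blast
    then show ?thesis using mv_in(1) 2 by blast
  qed
qed

lemma F1: assumes "S \<in> fam VL VR M adj k u" "v \<in> S" "v \<in> VL" shows "mv adj M v \<in> S"
proof -
  have "card (nbrs adj v \<inter> (S \<inter> M)) = 1" using assms unfolding fam_def by blast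
  then obtain x where "nbrs adj v \<inter> (S \<inter> M) = {x}" using card_1_singletonE by blast
  then have "x \<in> nbrs adj v \<inter> M" "x \<in> S" by auto
  then show ?thesis using mv_in(2)[OF assms(3)] by metis
qed

lemma AA_sub: assumes "S \<in> fam VL VR M adj k u" "C \<subseteq> S" "C \<subseteq> VR"
  shows "AA adj M u C \<subseteq> S"
proof
  fix x assume "x \<in> AA adj M u C"
  then consider "x = mv adj M u" | c w where "c \<in> C" "w \<in> nbrs adj c" "x = mv adj M w"
    unfolding AA_def by blast
  then show "x \<in> S"
  proof cases
    case 1 then show ?thesis using F1 assms(1) uL unfolding fam_def by blast
  next
    case 2
    then have wL: "w \<in> VL" using adjL assms unfolding nbrs_def by blast
    have "w \<in> S" using 2 assms unfolding fam_def by blast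
    then show ?thesis using F1[OF assms(1) _ wL] 2 by blast
  qed
qed

lemma DD_sub: assumes "S \<in> fam VL VR M adj k u" "C \<subseteq> S" "C \<subseteq> VR"
  shows "DD adj M u C \<subseteq> S"
proof
  fix w assume "w \<in> DD adj M u C"
  then obtain x where x: "x \<in> AA adj M u C" "w \<in> nbrs adj x" unfolding DD_def by blast
  have "x \<in> S" "x \<in> VR" using AA_sub[OF assms] AA_M[OF assms(3)] MR x by blast+
  then show "w \<in> S" using assms(1) x unfolding fam_def by blast
qed

lemma empty_case: assumes "finite C" "C \<subseteq> VR - M" "card C \<ge> k"
  shows "{S \<in> fam VL VR M adj k u. C \<subseteq> S} = {}"
proof (rule ccontr)
  assume "{S \<in> fam VL VR M adj k u. C \<subseteq> S} \<noteq> {}"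
  then obtain S where S: "S \<in> fam VL VR M adj k u" "C \<subseteq> S" by blast
  have m: "mv adj M u \<in> S" using F1 S uL unfolding fam_def by blast
  have mM: "mv adj M u \<in> M" using mv_in(1)[OF uL] by blast
  have "insert (mv adj M u) C \<subseteq> S \<inter> VR" using m mM MR S assms(2) by blast
  moreover have "finite (S \<inter> VR)" using finR by blast
  ultimately have "card (insert (mv adj M u) C) \<le> card (S \<inter> VR)" by (rule card_mono[rotated])
  moreover have "mv adj M u \<notin> C" using mM assms(2) by blast
  then have "card (insert (mv adj M u) C) = card C + 1" using assms(1) by simp
  moreover have "card (S \<inter> VR) = k" using S unfolding fam_def by blast
  ultimately show False using assms(3) by linarith
qed

lemma det_case: assumes "C \<subseteq> VR - M" "\<forall>v\<in>DD adj M u C. nbrs adj v \<inter> C \<noteq> {}"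
  shows "{S \<in> fam VL VR M adj k u. C \<subseteq> S} \<subseteq> {AA adj M u C \<union> C \<union> DD adj M u C}"
proof
  fix S assume "S \<in> {S \<in> fam VL VR M adj k u. C \<subseteq> S}"
  then have S: "S \<in> fam VL VR M adj k u" "C \<subseteq> S" by auto
  have CR: "C \<subseteq> VR" using assms by blast
  let ?Z = "AA adj M u C \<union> C \<union> DD adj M u C"
  have "?Z \<subseteq> S" using AA_sub[OF S CR] DD_sub[OF S CR] S by blast
  moreover have "S \<subseteq> ?Z"
  proof
    fix y assume yS: "y \<in> S"
    have conn: "(\<lambda>a b. a \<in> S \<and> b \<in> S \<and> adj a b)\<^sup>*\<^sup>* u y"
      using S yS unfolding fam_def connected_induced_def by blast
    have u0: "u \<in> ?Z"
    proof -
      have "mv adj M u \<in> AA adj M u C" unfolding AA_def by blast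
      moreover have "u \<in> nbrs adj (mv adj M u)" using mv_in(1)[OF uL] sym unfolding nbrs_def by blast
      ultimately show ?thesis unfolding DD_def by blast
    qed
    from conn show "y \<in> ?Z"
    proof (induction rule: rtranclp_induct)
      case base then show ?case using u0 .
    next
      case (step a b)
      then have ab: "a \<in> S" "b \<in> S" "adj a b" "a \<in> ?Z" by auto
      consider "a \<in> AA adj M u C" | "a \<in> C" | "a \<in> DD adj M u C" using ab by blast
      then show ?case
      proof cases
        case 1 then show ?thesis using ab unfolding DD_def nbrs_def by blast
      next
        case 2
        then have bL: "b \<in> VL" using adjL CR ab by blast
        have "mv adj M b \<in> AA adj M u C" unfolding AA_def nbrs_def using 2 ab by blast
        moreover have "b \<in> nbrs adj (mv adj M b)" using mv_in(1)[OF bL] sym unfolding nbrs_def by blast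
        ultimately show ?thesis unfolding DD_def by blast
      next
        case 3
        then obtain x where x: "x \<in> AA adj M u C" "a \<in> nbrs adj x" unfolding DD_def by blast
        have xM: "x \<in> M" using x AA_M[OF CR] by blast
        then have aL: "a \<in> VL" using adjL MR x unfolding nbrs_def by blast
        have xa: "x = mv adj M a" using mv_in(2)[OF aL] xM x sym unfolding nbrs_def by blast
        have bR: "b \<in> VR" using bip ab aL disj by blast
        show ?thesis
        proof (cases "b \<in> M")
          case True
          then have "b = mv adj M a" using mv_in(2)[OF aL] ab unfolding nbrs_def by blast
          then show ?thesis using xa x by blast
        next
          case False
          obtain c where c: "c \<in> nbrs adj a" "c \<in> C" using assms(2) 3 by blast
          have "card (nbrs adj a \<inter> (S \<inter> (VR - M))) = 1" using S ab aL unfolding fam_def by blast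
          then obtain z where z: "nbrs adj a \<inter> (S \<inter> (VR - M)) = {z}" using card_1_singletonE by blast
          have "c \<in> nbrs adj a \<inter> (S \<inter> (VR - M))" using c S assms(1) by blast
          moreover have "b \<in> nbrs adj a \<inter> (S \<inter> (VR - M))" using ab bR False unfolding nbrs_def by blast
          ultimately have "b = c" using z by (metis singletonD)
          then show ?thesis using c by blast
        qed
      qed
    qed
  qed
  ultimately show "S \<in> {?Z}" by blast
qed

lemma small_delta: assumes "\<Delta>L \<le> 1" shows "fam VL VR M adj k u = {}"
proof (rule ccontr)
  assume "fam VL VR M adj k u \<noteq> {}"
  then obtain S where S: "S \<in> fam VL VR M adj k u" by blast
  have "u \<in> S" using S unfolding fam_def by blast
  then have c: "card (nbrs adj u \<inter> (S \<inter> M)) = 1" "card (nbrs adj u \<inter> (S \<inter> (VR - M))) = 1"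
    using S uL unfolding fam_def by blast+
  obtain a where a: "a \<in> nbrs adj u \<inter> (S \<inter> M)" using c(1) card_1_singletonE by blast
  obtain b where b: "b \<in> nbrs adj u \<inter> (S \<inter> (VR - M))" using c(2) card_1_singletonE by blast
  have "{a, b} \<subseteq> nbrs adj u" using a b by blast
  then have "card {a, b} \<le> degree adj u" unfolding degree_def using nbrs_fin card_mono by blast
  moreover have "a \<noteq> b" using a b by blast
  ultimately show False using degL uL assms by auto
qed

lemma main: assumes "finite C" "C \<subseteq> VR - M"
  shows "card {S \<in> fam VL VR M adj k u. C \<subseteq> S} \<le> (\<Delta>L - 1) ^ (k - 1 - card C)"
  using assms
proof (induction "k - card C" arbitrary: C rule: less_induct)
  case less
  have finF: "finite (fam VL VR M adj k u)"
  proof -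
    have "fam VL VR M adj k u \<subseteq> Pow (VL \<union> VR)" unfolding fam_def by blast
    then show ?thesis using finL finR finite_subset by blast
  qed
  show ?case
  proof (cases "card C \<ge> k")
    case True
    then have "{S \<in> fam VL VR M adj k u. C \<subseteq> S} = {}" using empty_case[OF less.prems] by blast
    then show ?thesis by (metis card.empty zero_le)
  next
    case ck: False
    show ?thesis
    proof (cases "\<forall>v\<in>DD adj M u C. nbrs adj v \<inter> C \<noteq> {}")
      case True
      show ?thesis
      proof (cases "\<Delta>L \<le> 1")
        case True
        then show ?thesis using small_delta by simp
      next
        case False
      have "card {S \<in> fam VL VR M adj k u. C \<subseteq> S} \<le> card {AA adj M u C \<union> C \<union> DD adj M u C}"
        by (rule card_mono) (use det_case[OF less.prems(2) \<open>\<forall>v\<in>DD adj M u C. nbrs adj v \<inter> C \<noteq> {}\<close>] in auto)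
      also have "\<dots> \<le> (\<Delta>L - 1) ^ (k - 1 - card C)"
        using False by simp
      finally show ?thesis .
      qed
    next
      case False
      then obtain v where v: "v \<in> DD adj M u C" "nbrs adj v \<inter> C = {}" by blast
      have CR: "C \<subseteq> VR" using less.prems by blast
      obtain x where x: "x \<in> AA adj M u C" "v \<in> nbrs adj x" using v unfolding DD_def by blast
      have xM: "x \<in> M" using x AA_M[OF CR] by blast
      then have vL: "v \<in> VL" using adjL MR x unfolding nbrs_def by blast
      let ?N = "nbrs adj v - M"
      have sub: "{S \<in> fam VL VR M adj k u. C \<subseteq> S} \<subseteq> (\<Union>n\<in>?N. {S \<in> fam VL VR M adj k u. insert n C \<subseteq> S})"
      proof
        fix S assume "S \<in> {S \<in> fam VL VR M adj k u. C \<subseteq> S}"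
        then have S: "S \<in> fam VL VR M adj k u" "C \<subseteq> S" by auto
        have "v \<in> S" using DD_sub[OF S CR] v by blast
        then have "card (nbrs adj v \<inter> (S \<inter> (VR - M))) = 1" using S vL unfolding fam_def by blast
        then obtain z where z: "nbrs adj v \<inter> (S \<inter> (VR - M)) = {z}" using card_1_singletonE by blast
        then show "S \<in> (\<Union>n\<in>?N. {S \<in> fam VL VR M adj k u. insert n C \<subseteq> S})" using S by blast
      qed
      have IH: "card {S \<in> fam VL VR M adj k u. insert n C \<subseteq> S} \<le> (\<Delta>L - 1) ^ (k - 1 - (card C + 1))"
        if n: "n \<in> ?N" for n
      proof -
        have nR: "n \<in> VR - M" using n vL bip disj unfolding nbrs_def by blast
        have nC: "n \<notin> C" using n v by blast
        have c: "card (insert n C) = card C + 1" using nC less.prems by simp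
        have "card {S \<in> fam VL VR M adj k u. insert n C \<subseteq> S} \<le> (\<Delta>L - 1) ^ (k - 1 - card (insert n C))"
          by (rule less.hyps) (use ck c less.prems nR in auto)
        then show ?thesis using c by simp
      qed
      have cardN: "card ?N \<le> \<Delta>L - 1"
      proof -
        have "card ?N = card (nbrs adj v) - card (nbrs adj v \<inter> M)"
          by (metis Diff_Int2 Int_absorb card_Diff_subset_Int inf.cobounded1 nbrs_fin finite_Int)
        then show ?thesis using Mone degL vL unfolding degree_def by auto
      qed
      show ?thesis
      proof (cases "card C + 1 < k")
        case False
        have "{S \<in> fam VL VR M adj k u. C \<subseteq> S} = {}"
        proof -
          have "{S \<in> fam VL VR M adj k u. insert n C \<subseteq> S} = {}" if n: "n \<in> ?N" for n
          proof (rule empty_case)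
            have nR: "n \<in> VR - M" using n vL bip disj unfolding nbrs_def by blast
            have nC: "n \<notin> C" using n v by blast
            show "finite (insert n C)" using less.prems by simp
            show "insert n C \<subseteq> VR - M" using nR less.prems by blast
            show "k \<le> card (insert n C)" using nC less.prems False by simp
          qed
          then show ?thesis using sub by blast
        qed
        then show ?thesis by (metis card.empty zero_le)
      next
        case True
      have "card {S \<in> fam VL VR M adj k u. C \<subseteq> S} \<le> card (\<Union>n\<in>?N. {S \<in> fam VL VR M adj k u. insert n C \<subseteq> S})"
        by (rule card_mono) (use sub finF nbrs_fin in auto)
      also have "\<dots> \<le> (\<Sum>n\<in>?N. card {S \<in> fam VL VR M adj k u. insert n C \<subseteq> S})"
        by (rule card_UN_le) (use nbrs_fin in auto)
      also have "\<dots> \<le> (\<Sum>n\<in>?N. (\<Delta>L - 1) ^ (k - 1 - (card C + 1)))"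
        by (rule sum_mono) (rule IH)
      also have "\<dots> = card ?N * (\<Delta>L - 1) ^ (k - 1 - (card C + 1))" by simp
      also have "\<dots> \<le> (\<Delta>L - 1) * (\<Delta>L - 1) ^ (k - 1 - (card C + 1))"
        using cardN by simp
      also have "\<dots> = (\<Delta>L - 1) ^ (k - 1 - card C)"
      proof -
        have "k - 1 - card C = Suc (k - 1 - (card C + 1))" using True by simp
        then show ?thesis by simp
      qed
      finally show ?thesis .
      qed
    qed
  qed
qed

end

theorem mainTheorem16:
  fixes VL VR M :: "'a set" and adj :: "'a \<Rightarrow> 'a \<Rightarrow> bool" and \<Delta>L k :: nat and u :: 'a
  assumes "bipartite_graph VL VR adj"
    and "\<forall>v\<in>VL. degree adj v \<le> \<Delta>L"
    and "\<forall>v\<in>VR. degree adj v \<ge> 2"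
    and "M \<subseteq> VR"
    and "\<forall>v\<in>VL. card (nbrs adj v \<inter> M) = 1"
    and "u \<in> VL" and "k \<ge> 1"
  shows "card {S. S \<subseteq> VL \<union> VR \<and> connected_induced adj S \<and>
                 u \<in> S \<and>
                 card (S \<inter> VR) = k \<and>
                 (\<forall>v\<in>S \<inter> VR. nbrs adj v \<subseteq> S) \<and>
                 (\<forall>v\<in>S \<inter> VL. card (nbrs adj v \<inter> (S \<inter> M)) = 1 \<and>
                               card (nbrs adj v \<inter> (S \<inter> (VR - M))) = 1)}
         \<le> (\<Delta>L - 1) ^ (k - 1)"
  using main[OF assms(1,2,4,5,6), of "{}" k] unfolding fam_def by simp

end
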